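(* Let $N=\{1,\dots,n\}$ and let $F:2^N\to\mathbb{R}$ be quasi-submodular. Let $Q_1=\{i\in N: F(i\mid\emptyset)<0\}$ and $S_1=\{i\in N: F(i\mid N-i)\le 0\}$. Then every global minimizer of $F$ lies in $[Q_1,S_1]$, i.e., for every $X_*\in\arg\min_{X\subseteq N}F(X)$, $Q_1\subseteq X_*\subseteq S_1$.
   Context: For $A\subseteq N$ and $i\in N$, write $A+i=A\cup\{i\}$, $A-i=A\setminus\{i\}$, and $F(i\mid A)=F(A+i)-F(A)$. $F$ is quasi-submodular if for all $X,Y\subseteq N$ both hold: $F(X\cap Y)\ge F(X)\Rightarrow F(Y)\ge F(X\cup Y)$, and $F(X\cap Y)>F(X)\Rightarrow F(Y)>F(X\cup Y)$. $[A,B]=\{U: A\subseteq U\subseteq B\}$. *)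

theory Defs
  imports Main "HOL.Real"
begin

definition marg :: "('a set \<Rightarrow> real) \<Rightarrow> 'a \<Rightarrow> 'a set \<Rightarrow> real" where
  "marg F i A = F (insert i A) - F A"

definition quasi_submodular :: "'a set \<Rightarrow> ('a set \<Rightarrow> real) \<Rightarrow> bool" where
  "quasi_submodular N F \<longleftrightarrow>
     (\<forall>X Y. X \<subseteq> N \<longrightarrow> Y \<subseteq> N \<longrightarrow>
        (F (X \<inter> Y) \<ge> F X \<longrightarrow> F Y \<ge> F (X \<union> Y)) \<and>
        (F (X \<inter> Y) > F X \<longrightarrow> F Y > F (X \<union> Y)))"

end

theory Submission
  imports Defs
begin

theorem lemma2:
  fixes n :: nat and F :: "nat set \<Rightarrow> real" and Xs :: "nat set"
  defines "N \<equiv> {1..n}"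
  defines "Q1 \<equiv> {i \<in> N. marg F i {} < 0}"
  defines "S1 \<equiv> {i \<in> N. marg F i (N - {i}) \<le> 0}"
  assumes qs: "quasi_submodular N F"
    and Xs_sub: "Xs \<subseteq> N"
    and Xs_min: "\<forall>X. X \<subseteq> N \<longrightarrow> F Xs \<le> F X"
  shows "Q1 \<subseteq> Xs \<and> Xs \<subseteq> S1"
proof
  show "Q1 \<subseteq> Xs"
  proof
    fix i assume i: "i \<in> Q1"
    show "i \<in> Xs"
    proof (rule ccontr)
      assume ni: "i \<notin> Xs"
      have iN: "i \<in> N" and lt: "F {} > F {i}" using i unfolding Q1_def marg_def by auto
      have "{i} \<inter> Xs = {}" using ni by auto
      moreover have "{i} \<union> Xs = insert i Xs" by auto
      ultimately have "F Xs > F (insert i Xs)"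
        using qs iN Xs_sub lt unfolding quasi_submodular_def
        by (metis empty_subsetI insert_subset)
      moreover have "F Xs \<le> F (insert i Xs)" using Xs_min iN Xs_sub by auto
      ultimately show False by simp
    qed
  qed
next
  show "Xs \<subseteq> S1"
  proof
    fix i assume i: "i \<in> Xs"
    have iN: "i \<in> N" using i Xs_sub by auto
    have ins: "insert i (N - {i}) = N" using iN by auto
    have "F (Xs \<inter> (N - {i})) \<ge> F Xs" using Xs_min Xs_sub by (meson Int_lower2 Diff_subset order_trans)
    moreover have "Xs \<union> (N - {i}) = N" using i Xs_sub by auto
    ultimately have "F (N - {i}) \<ge> F N"
      using qs Xs_sub unfolding quasi_submodular_def by (metis Diff_subset)
    then show "i \<in> S1" unfolding S1_def marg_def using iN ins by auto
  qed
qed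

end
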